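(* Let $G$ be a finite simple graph of order $n\ge 3$ and let $e(G)$ denote its number of edges. (a) Suppose every vertex of $G$ lies in a cycle of $G$. Then $crx_1(G)=e(G)$ if and only if $G$ is the cycle $C_n$. (b) Suppose $G$ is $2$-connected. Then $crx_2(G)=e(G)$ if and only if $G$ is minimally $2$-connected. (c) Suppose $G$ is Hamiltonian, and let $1\le k\le n$. Then $crx_k(G)=e(G)$ if and only if $G$ is the cycle $C_n$.
   Context: An edge-coloured cycle is rainbow if its edges have distinct colours. For $k\ge 1$, let $\mathcal F_k$ be the family of graphs in which any $k$ vertices lie in a common cycle. For $G\in\mathcal F_k$, a $k$-rainbow cycle colouring of $G$ is an edge-colouring such that every set of $k$ vertices lies in some rainbow cycle; $crx_k(G)$, the $k$-rainbow cycle index, is the minimum number of colours in a $k$-rainbow cycle colouring of $G$. A graph is minimally $2$-connected if it is $2$-connected and deleting any edge destroys $2$-connectivity. *)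

theory Defs
  imports Main
begin

definition simple_graph :: "'a set \<Rightarrow> 'a set set \<Rightarrow> bool" where
  "simple_graph V E \<longleftrightarrow> finite V \<and> (\<forall>e\<in>E. e \<subseteq> V \<and> card e = 2)"

definition adj :: "'a set set \<Rightarrow> 'a \<Rightarrow> 'a \<Rightarrow> bool" where
  "adj E u v \<longleftrightarrow> {u, v} \<in> E"

definition is_cycle :: "'a set \<Rightarrow> 'a set set \<Rightarrow> 'a list \<Rightarrow> bool" where
  "is_cycle V E vs \<longleftrightarrow> length vs \<ge> 3 \<and> distinct vs \<and> set vs \<subseteq> V \<and>
     (\<forall>i < length vs. adj E (vs ! i) (vs ! ((i + 1) mod length vs)))"

definition cycle_edges :: "'a list \<Rightarrow> 'a set set" where
  "cycle_edges vs = {{vs ! i, vs ! ((i + 1) mod length vs)} | i. i < length vs}"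

definition rainbow_cycle :: "'a set \<Rightarrow> 'a set set \<Rightarrow> ('a set \<Rightarrow> nat) \<Rightarrow> 'a list \<Rightarrow> bool" where
  "rainbow_cycle V E c vs \<longleftrightarrow> is_cycle V E vs \<and> inj_on c (cycle_edges vs)"

definition in_F :: "nat \<Rightarrow> 'a set \<Rightarrow> 'a set set \<Rightarrow> bool" where
  "in_F k V E \<longleftrightarrow> (\<forall>S. S \<subseteq> V \<and> card S = k \<longrightarrow> (\<exists>vs. is_cycle V E vs \<and> S \<subseteq> set vs))"

definition k_rainbow_cycle_colouring ::
  "nat \<Rightarrow> 'a set \<Rightarrow> 'a set set \<Rightarrow> ('a set \<Rightarrow> nat) \<Rightarrow> bool" where
  "k_rainbow_cycle_colouring k V E c \<longleftrightarrow>
     (\<forall>S. S \<subseteq> V \<and> card S = k \<longrightarrow> (\<exists>vs. rainbow_cycle V E c vs \<and> S \<subseteq> set vs))"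

definition num_colours :: "'a set set \<Rightarrow> ('a set \<Rightarrow> nat) \<Rightarrow> nat" where
  "num_colours E c = card (c ` E)"

text \<open>k-rainbow cycle index (meaningful for graphs in F_k).\<close>
definition crx :: "nat \<Rightarrow> 'a set \<Rightarrow> 'a set set \<Rightarrow> nat" where
  "crx k V E = (LEAST m. \<exists>c. k_rainbow_cycle_colouring k V E c \<and> num_colours E c = m)"

definition connected :: "'a set \<Rightarrow> 'a set set \<Rightarrow> bool" where
  "connected V E \<longleftrightarrow> V \<noteq> {} \<and>
     (\<forall>u\<in>V. \<forall>v\<in>V. (\<lambda>x y. x \<in> V \<and> y \<in> V \<and> adj E x y)\<^sup>*\<^sup>* u v)"

definition two_connected :: "'a set \<Rightarrow> 'a set set \<Rightarrow> bool" where
  "two_connected V E \<longleftrightarrow> card V \<ge> 3 \<and> connected V E \<and>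
     (\<forall>v\<in>V. connected (V - {v}) {e \<in> E. v \<notin> e})"

definition minimally_two_connected :: "'a set \<Rightarrow> 'a set set \<Rightarrow> bool" where
  "minimally_two_connected V E \<longleftrightarrow> two_connected V E \<and>
     (\<forall>e\<in>E. \<not> two_connected V (E - {e}))"

definition hamiltonian :: "'a set \<Rightarrow> 'a set set \<Rightarrow> bool" where
  "hamiltonian V E \<longleftrightarrow> (\<exists>vs. is_cycle V E vs \<and> set vs = V)"

text \<open>G is (isomorphic to) the cycle C_n, n = |V|: a Hamiltonian cycle using exactly all edges.\<close>
definition is_cycle_graph :: "'a set \<Rightarrow> 'a set set \<Rightarrow> bool" where
  "is_cycle_graph V E \<longleftrightarrow> (\<exists>vs. is_cycle V E vs \<and> set vs = V \<and> cycle_edges vs = E)"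

end

theory Submission
  imports Defs
begin

fun pedges :: "'a list \<Rightarrow> 'a set set" where
  "pedges (a # b # xs) = insert {a, b} (pedges (b # xs))"
| "pedges _ = {}"

lemma pedges_append:
  "pedges (xs @ ys) = pedges xs \<union> pedges ys \<union> (if xs \<noteq> [] \<and> ys \<noteq> [] then {{last xs, hd ys}} else {})"
proof (induction xs rule: pedges.induct)
  case (1 a b xs) then show ?case by auto
next
  case ("2_1") then show ?case by simp
next
  case ("2_2" a) then show ?case by (cases ys) auto
qed

lemma pedges_rev: "pedges (rev xs) = pedges xs"
proof (induction xs rule: pedges.induct)
  case (1 a b xs)
  have "pedges (rev (a # b # xs)) = pedges (rev (b # xs) @ [a])" by simp
  also have "\<dots> = pedges (rev (b # xs)) \<union> {{last (rev (b # xs)), a}}"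
    by (subst pedges_append) simp
  also have "last (rev (b # xs)) = b" by simp
  also have "{b, a} = {a, b}" by blast
  finally show ?case using 1 by simp
qed auto

lemma pedges_Cons: "xs \<noteq> [] \<Longrightarrow> pedges (a # xs) = insert {a, hd xs} (pedges xs)"
  by (cases xs) auto

lemma pedges_nth: "pedges xs = {{xs ! i, xs ! Suc i} | i. Suc i < length xs}"
proof (induction xs rule: pedges.induct)
  case (1 a b xs)
  show ?case
  proof
    show "pedges (a # b # xs) \<subseteq> {{(a # b # xs) ! i, (a # b # xs) ! Suc i} |i. Suc i < length (a # b # xs)}"
    proof
      fix g assume "g \<in> pedges (a # b # xs)"
      then consider "g = {a, b}" | "g \<in> pedges (b # xs)" by auto
      then show "g \<in> {{(a # b # xs) ! i, (a # b # xs) ! Suc i} |i. Suc i < length (a # b # xs)}"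
      proof cases
        case 1 then show ?thesis by (rule_tac CollectI, rule_tac x=0 in exI) auto
      next
        case 2
        then obtain i where "g = {(b#xs) ! i, (b#xs) ! Suc i}" "Suc i < length (b # xs)"
          using "1.IH" by auto
        then show ?thesis by (rule_tac CollectI, rule_tac x="Suc i" in exI) auto
      qed
    qed
  next
    show "{{(a # b # xs) ! i, (a # b # xs) ! Suc i} |i. Suc i < length (a # b # xs)} \<subseteq> pedges (a # b # xs)"
    proof
      fix g assume "g \<in> {{(a # b # xs) ! i, (a # b # xs) ! Suc i} |i. Suc i < length (a # b # xs)}"
      then obtain i where g: "g = {(a # b # xs) ! i, (a # b # xs) ! Suc i}" "Suc i < length (a # b # xs)" by auto
      show "g \<in> pedges (a # b # xs)"
      proof (cases i)
        case 0 then show ?thesis using g by simp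
      next
        case (Suc j)
        then have "g \<in> {{(b # xs) ! i, (b # xs) ! Suc i} |i. Suc i < length (b # xs)}"
          using g by auto
        then show ?thesis using "1.IH" by auto
      qed
    qed
  qed
qed auto

lemma idx_split_last:
  fixes f :: "nat \<Rightarrow> 'b"
  assumes "0 < n"
  shows "{f i | i. i < n} = insert (f (n - 1)) {f i | i. i < n - 1}"
proof -
  obtain m where m: "n = Suc m" using assms by (cases n) auto
  have "{f i | i. i < Suc m} = f ` {..<Suc m}" by auto
  also have "\<dots> = insert (f m) (f ` {..<m})" by (simp add: lessThan_Suc)
  also have "f ` {..<m} = {f i | i. i < m}" by auto
  finally show ?thesis using m by simp
qed

lemma cycle_edges_alt:
  assumes "vs \<noteq> []"
  shows "cycle_edges vs = insert {last vs, hd vs} (pedges vs)"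
proof -
  let ?n = "length vs"
  have A: "cycle_edges vs = insert {vs ! (?n - 1), vs ! ((?n - 1 + 1) mod ?n)} {{vs ! i, vs ! ((i + 1) mod ?n)} | i. i < ?n - 1}"
    unfolding cycle_edges_def using assms
    by (subst idx_split_last[where f = "\<lambda>i. {vs ! i, vs ! ((i + 1) mod ?n)}"]) auto
  have B: "{{vs ! i, vs ! ((i + 1) mod ?n)} | i. i < ?n - 1} = {{vs ! i, vs ! Suc i} | i. i < ?n - 1}"
  proof -
    have h: "\<And>i. i < ?n - 1 \<Longrightarrow> (i + 1) mod ?n = Suc i" by simp
    show ?thesis
    proof (rule Collect_cong, rule iffI)
      fix x assume "\<exists>i. x = {vs ! i, vs ! ((i + 1) mod ?n)} \<and> i < ?n - 1"
      then obtain i where "x = {vs ! i, vs ! ((i + 1) mod ?n)}" "i < ?n - 1" by blast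
      then show "\<exists>i. x = {vs ! i, vs ! Suc i} \<and> i < ?n - 1" using h by metis
    next
      fix x assume "\<exists>i. x = {vs ! i, vs ! Suc i} \<and> i < ?n - 1"
      then obtain i where "x = {vs ! i, vs ! Suc i}" "i < ?n - 1" by blast
      then show "\<exists>i. x = {vs ! i, vs ! ((i + 1) mod ?n)} \<and> i < ?n - 1" using h by metis
    qed
  qed
  have B2: "{{vs ! i, vs ! Suc i} | i. i < ?n - 1} = pedges vs"
    unfolding pedges_nth by (simp add: less_diff_conv)
  have C: "vs ! (?n - 1) = last vs" using assms by (simp add: last_conv_nth)
  have D: "vs ! ((?n - 1 + 1) mod ?n) = hd vs" using assms by (simp add: hd_conv_nth)
  show ?thesis using A B B2 C D by simp
qed

lemma is_cycle_alt:
  "is_cycle V E vs \<longleftrightarrow> 3 \<le> length vs \<and> distinct vs \<and> set vs \<subseteq> V \<and> cycle_edges vs \<subseteq> E"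
  unfolding is_cycle_def cycle_edges_def adj_def by auto

lemma cycle_edges_rotate1: "cycle_edges (rotate1 vs) = cycle_edges vs"
proof (cases vs)
  case Nil then show ?thesis by simp
next
  case (Cons a xs)
  show ?thesis
  proof (cases xs)
    case Nil then show ?thesis using Cons by simp
  next
    case (Cons b ys)
    have "cycle_edges (rotate1 vs) = cycle_edges (xs @ [a])" using \<open>vs = a # xs\<close> by simp
    also have "\<dots> = insert {a, hd xs} (pedges (xs @ [a]))"
      by (subst cycle_edges_alt) (auto simp: Cons)
    also have "\<dots> = insert {a, hd xs} (insert {last xs, a} (pedges xs))"
      using pedges_append[of xs "[a]"] Cons by auto
    also have "\<dots> = cycle_edges vs"
      by (subst cycle_edges_alt) (auto simp: \<open>vs = a # xs\<close> Cons)
    finally show ?thesis .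
  qed
qed

lemma cycle_edges_rotate: "cycle_edges (rotate n vs) = cycle_edges vs"
  by (induction n) (auto simp: cycle_edges_rotate1)

lemma is_cycle_rotate: "is_cycle V E vs \<Longrightarrow> is_cycle V E (rotate n vs)"
  unfolding is_cycle_alt by (simp add: cycle_edges_rotate)

lemma cycle_edges_rev: "cycle_edges (rev vs) = cycle_edges vs"
proof (cases "vs = []")
  case False
  then show ?thesis
  proof -
    have "{hd vs, last vs} = {last vs, hd vs}" by blast
    then show ?thesis using False by (simp add: cycle_edges_alt pedges_rev hd_rev last_rev)
  qed
qed simp

lemma rotate_to_front:
  assumes "b \<in> set vs"
  obtains n ys where "rotate n vs = b # ys"
proof -
  obtain xs ys where "vs = xs @ b # ys" using split_list[OF assms] by auto
  then have "rotate (length xs) vs = (b # ys) @ xs" by (simp add: rotate_append)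
  then show ?thesis using that by auto
qed

lemma pedges_subset_set: "g \<in> pedges xs \<Longrightarrow> g \<subseteq> set xs"
  by (induction xs rule: pedges.induct) auto

lemma cycle_edges_subset_set: "vs \<noteq> [] \<Longrightarrow> g \<in> cycle_edges vs \<Longrightarrow> g \<subseteq> set vs"
  by (auto simp: cycle_edges_alt dest: pedges_subset_set)

definition R :: "'a set \<Rightarrow> 'a set set \<Rightarrow> 'a \<Rightarrow> 'a \<Rightarrow> bool" where
  "R V E x y \<longleftrightarrow> x \<in> V \<and> y \<in> V \<and> adj E x y"

lemma connected_R: "connected V E \<longleftrightarrow> V \<noteq> {} \<and> (\<forall>u\<in>V. \<forall>v\<in>V. (R V E)\<^sup>*\<^sup>* u v)"
proof -
  have "R V E = (\<lambda>x y. x \<in> V \<and> y \<in> V \<and> adj E x y)" by (auto simp: R_def fun_eq_iff)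
  then show ?thesis unfolding connected_def by simp
qed

lemma exit_lemma:
  assumes "P\<^sup>*\<^sup>* a b" "a \<in> S" "b \<notin> S"
  shows "\<exists>s t. s \<in> S \<and> t \<notin> S \<and> P s t"
  using assms by (induction rule: rtranclp_induct) auto

lemma pedges_append_sub1: "pedges xs \<subseteq> pedges (xs @ ys)"
  by (subst pedges_append) auto

lemma pedges_append_sub2: "pedges ys \<subseteq> pedges (xs @ ys)"
  by (subst pedges_append) auto

definition walk :: "'a set \<Rightarrow> 'a set set \<Rightarrow> 'a list \<Rightarrow> 'a \<Rightarrow> 'a \<Rightarrow> bool" where
  "walk V E P a b \<longleftrightarrow> P \<noteq> [] \<and> hd P = a \<and> last P = b \<and> set P \<subseteq> V \<and> pedges P \<subseteq> E"

lemma rtranclp_walk: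
  assumes "(R V E)\<^sup>*\<^sup>* a b" "a \<in> V"
  shows "\<exists>P. walk V E P a b"
  using assms
proof (induction rule: rtranclp_induct)
  case base
  then show ?case by (rule_tac x="[a]" in exI) (simp add: walk_def)
next
  case (step y z)
  then obtain P where P: "walk V E P a y" by blast
  have "walk V E (P @ [z]) a z"
    using P step(2) unfolding walk_def R_def adj_def
    by (auto simp: pedges_append)
  then show ?case by blast
qed

lemma walk_shorten:
  assumes "walk V E P a b"
  shows "\<exists>Q. walk V E Q a b \<and> distinct Q"
  using assms
proof (induction "length P" arbitrary: P rule: less_induct)
  case less
  show ?case
  proof (cases "distinct P")
    case True then show ?thesis using less.prems by blast
  next
    case False
    then obtain xs ys zs y where P: "P = xs @ [y] @ ys @ [y] @ zs"
      using not_distinct_decomp by blast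
    let ?Q = "xs @ [y] @ zs"
    have len: "length ?Q < length P" using P by simp
    have h: "hd ?Q = a" using less.prems P unfolding walk_def by (cases xs) auto
    have l: "last ?Q = b" using less.prems P unfolding walk_def by (cases zs) auto
    have s: "set ?Q \<subseteq> V" using less.prems P unfolding walk_def by auto
    have "pedges ([y] @ zs) \<subseteq> pedges ((y # ys) @ [y] @ zs)" by (rule pedges_append_sub2)
    then have "pedges ?Q \<subseteq> pedges P"
      using P by (auto simp: pedges_append)
    then have "walk V E ?Q a b" using h l s less.prems unfolding walk_def by auto
    then show ?thesis using less.hyps len by blast
  qed
qed

lemma rtranclp_path:
  assumes "(R V E)\<^sup>*\<^sup>* a b" "a \<in> V"
  shows "\<exists>P. walk V E P a b \<and> distinct P"
  using rtranclp_walk[OF assms] walk_shorten by metis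

lemma walk_rev: "walk V E P a b \<Longrightarrow> walk V E (rev P) b a"
  unfolding walk_def by (auto simp: pedges_rev hd_rev last_rev)

lemma walk_R: "walk V E P a b \<Longrightarrow> (R V E)\<^sup>*\<^sup>* a b"
proof (induction P arbitrary: a rule: pedges.induct)
  case (1 x y xs)
  then have "walk V E (y # xs) y b" unfolding walk_def by auto
  then have "(R V E)\<^sup>*\<^sup>* y b" using 1 by blast
  moreover have "R V E x y" using 1 unfolding walk_def R_def adj_def by auto
  ultimately show ?case using 1 unfolding walk_def
    by (metis converse_rtranclp_into_rtranclp list.sel(1))
next
  case ("2_2" x) then show ?case unfolding walk_def by auto
qed (auto simp: walk_def)

lemma R_mono: "V1 \<subseteq> V2 \<Longrightarrow> E1 \<subseteq> E2 \<Longrightarrow> (R V1 E1)\<^sup>*\<^sup>* x y \<Longrightarrow> (R V2 E2)\<^sup>*\<^sup>* x y"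
proof -
  assume a: "V1 \<subseteq> V2" "E1 \<subseteq> E2" "(R V1 E1)\<^sup>*\<^sup>* x y"
  have "R V1 E1 \<le> R V2 E2" using a(1,2) by (auto simp: R_def adj_def)
  then show ?thesis using a(3) rtranclp_mono by blast
qed

lemma is_cycle_rotate_front:
  assumes "is_cycle V E vs" "b \<in> set vs"
  obtains ys where "is_cycle V E (b # ys)" "set (b # ys) = set vs" "cycle_edges (b # ys) = cycle_edges vs"
proof -
  obtain n ys where r: "rotate n vs = b # ys" using rotate_to_front[OF assms(2)] by blast
  have "set (b # ys) = set vs" using r by (metis set_rotate)
  then show ?thesis
    using that[of ys] is_cycle_rotate[OF assms(1), of n] cycle_edges_rotate[of n vs] r by simp
qed

lemma cycle_nbrs:
  assumes "is_cycle V E vs" "b \<in> set vs"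
  shows "\<exists>a c. a \<noteq> c \<and> a \<noteq> b \<and> c \<noteq> b \<and> a \<in> set vs \<and> c \<in> set vs \<and>
     {b, a} \<in> cycle_edges vs \<and> {b, c} \<in> cycle_edges vs"
proof -
  obtain ys where c: "is_cycle V E (b # ys)" "set (b # ys) = set vs" "cycle_edges (b # ys) = cycle_edges vs"
    using is_cycle_rotate_front[OF assms] by blast
  have len: "length ys \<ge> 2" and d: "distinct (b # ys)" using c(1) unfolding is_cycle_alt by auto
  then obtain a zs where ys: "ys = a # zs" by (cases ys) auto
  have zs: "zs \<noteq> []" using len ys by auto
  have ce: "cycle_edges (b # ys) = insert {last ys, b} (insert {b, a} (pedges ys))"
    using ys by (simp add: cycle_edges_alt)
  have lz: "last ys \<in> set zs" using ys zs by simp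
  have "a \<noteq> last ys" using d ys lz by auto
  moreover have "last ys \<in> set ys" using ys by simp
  moreover have "{b, last ys} \<in> cycle_edges vs"
  proof -
    have "{b, last ys} = {last ys, b}" by blast
    then show ?thesis using ce c(3) by simp
  qed
  moreover have "{b, a} \<in> cycle_edges vs" using ce c(3) by simp
  moreover have bn: "b \<notin> set ys" using d by simp
  moreover have ai: "a \<in> set ys" using ys by simp
  moreover have "set ys \<subseteq> set vs" using c(2) by auto
  ultimately show ?thesis by blast
qed

lemma cycle_edge_in_E: "is_cycle V E vs \<Longrightarrow> g \<in> cycle_edges vs \<Longrightarrow> g \<in> E"
  unfolding is_cycle_alt by auto

lemma cycle_thru:
  assumes "is_cycle V E vs" "b \<in> set vs" "\<forall>t. {b, t} \<in> E \<longrightarrow> t = s1 \<or> t = s2"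
  shows "s1 \<in> set vs \<and> s2 \<in> set vs"
proof -
  obtain a c where ac: "a \<noteq> c" "a \<in> set vs" "c \<in> set vs" "{b, a} \<in> cycle_edges vs" "{b, c} \<in> cycle_edges vs"
    using cycle_nbrs[OF assms(1,2)] by blast
  have "a = s1 \<or> a = s2" "c = s1 \<or> c = s2"
    using assms(3) cycle_edge_in_E[OF assms(1)] ac by blast+
  then show ?thesis using ac by auto
qed

lemma simple_edge: "simple_graph V E \<Longrightarrow> g \<in> E \<Longrightarrow> \<exists>a b. a \<noteq> b \<and> g = {a, b} \<and> a \<in> V \<and> b \<in> V"
proof -
  assume a: "simple_graph V E" "g \<in> E"
  then have "g \<subseteq> V" "card g = 2" unfolding simple_graph_def by auto
  then show ?thesis unfolding card_2_iff by blast
qed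

lemma simple_edge2: "simple_graph V E \<Longrightarrow> {a, b} \<in> E \<Longrightarrow> a \<noteq> b \<and> a \<in> V \<and> b \<in> V"
proof -
  assume a: "simple_graph V E" "{a, b} \<in> E"
  then have "{a, b} \<subseteq> V" "card {a, b} = 2" unfolding simple_graph_def by auto
  then show ?thesis by (cases "a = b") auto
qed

lemma two_conn_del:
  assumes "two_connected V E" "w \<in> V" "a \<in> V" "b \<in> V" "a \<noteq> w" "b \<noteq> w"
  shows "(R (V - {w}) {g \<in> E. w \<notin> g})\<^sup>*\<^sup>* a b"
  using assms unfolding two_connected_def connected_R by blast

lemma two_conn_R:
  assumes "two_connected V E" "a \<in> V" "b \<in> V"
  shows "(R V E)\<^sup>*\<^sup>* a b"
  using assms unfolding two_connected_def connected_R by blast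

lemma third_vertex:
  assumes "finite V" "card V \<ge> 3"
  shows "\<exists>w\<in>V. w \<noteq> a \<and> w \<noteq> b"
proof (rule ccontr)
  assume "\<not> ?thesis"
  then have "V \<subseteq> {a, b}" by auto
  then have "card V \<le> card {a, b}" by (simp add: card_mono)
  also have "\<dots> \<le> 2" by (simp add: card_insert_le_m1)
  finally show False using assms by simp
qed

lemma edge_cycle:
  assumes sg: "simple_graph V E" and tc: "two_connected V E" and e: "{u, y} \<in> E"
  shows "\<exists>vs. is_cycle V E vs \<and> u \<in> set vs \<and> y \<in> set vs"
proof -
  have uy: "u \<noteq> y" "u \<in> V" "y \<in> V" using simple_edge2[OF sg e] by auto
  have fin: "finite V" "card V \<ge> 3" using sg tc unfolding simple_graph_def two_connected_def by auto
  obtain w where w: "w \<in> V" "w \<noteq> u" "w \<noteq> y" using third_vertex[OF fin] by blast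
  let ?E' = "E - {{u, y}}"
  have "(R (V - {u}) {g \<in> E. u \<notin> g})\<^sup>*\<^sup>* y w" using two_conn_del[OF tc uy(2)] uy w by auto
  then have 1: "(R V ?E')\<^sup>*\<^sup>* y w" by (rule R_mono[rotated 2]) auto
  have "(R (V - {y}) {g \<in> E. y \<notin> g})\<^sup>*\<^sup>* w u" using two_conn_del[OF tc uy(3)] uy w by auto
  then have 2: "(R V ?E')\<^sup>*\<^sup>* w u" by (rule R_mono[rotated 2]) auto
  obtain P where P: "walk V ?E' P y u" "distinct P"
    using rtranclp_path[OF rtranclp_trans[OF 1 2] uy(3)] by blast
  have Pne: "P \<noteq> []" "hd P = y" "last P = u" "set P \<subseteq> V" "pedges P \<subseteq> ?E'"
    using P(1) unfolding walk_def by simp_all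
  have "length P \<ge> 3"
  proof (rule ccontr)
    assume "\<not> length P \<ge> 3"
    moreover have "length P \<noteq> 0" using Pne(1) by simp
    ultimately consider "length P = 1" | "length P = 2" by linarith
    then show False
    proof cases
      case 1
      then obtain a where a: "P = [a]" by (auto simp: length_Suc_conv)
      have "y = a" using Pne(2) a by simp
      moreover have "u = a" using Pne(3) a by simp
      ultimately show False using uy(1) by simp
    next
      case 2
      then obtain a b where ab: "P = [a, b]" by (auto simp: length_Suc_conv numeral_2_eq_2)
      have "y = a" using Pne(2) ab by simp
      moreover have "u = b" using Pne(3) ab by simp
      moreover have "pedges P = {{a, b}}" using ab by simp
      moreover have "{y, u} = {u, y}" by blast
      ultimately show False using Pne(5) by auto
    qed
  qed
  moreover have "cycle_edges P \<subseteq> E"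
    using Pne e by (auto simp: cycle_edges_alt)
  ultimately have "is_cycle V E P" using P(2) Pne unfolding is_cycle_alt by auto
  moreover have "u \<in> set P" "y \<in> set P" using Pne by (auto intro: hd_in_set last_in_set)
  ultimately show ?thesis by blast
qed

lemma mk_cycle:
  assumes "distinct N" "3 \<le> length N" "set N \<subseteq> V" "pedges N \<subseteq> E" "{last N, hd N} \<in> E"
  shows "is_cycle V E N"
proof -
  have "N \<noteq> []" using assms(2) by auto
  then have "cycle_edges N \<subseteq> E" using assms(4,5) by (simp add: cycle_edges_alt)
  then show ?thesis using assms unfolding is_cycle_alt by simp
qed

lemma extend_cycle:
  assumes sg: "simple_graph V E" and tc: "two_connected V E"
    and cs: "is_cycle V E cs" and u: "u \<in> set cs" and x: "x \<in> set cs" and ux: "u \<noteq> x"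
    and e: "{x, y} \<in> E" and y: "y \<notin> set cs"
  shows "\<exists>vs. is_cycle V E vs \<and> u \<in> set vs \<and> y \<in> set vs"
proof -
  have xy: "x \<noteq> y" "x \<in> V" "y \<in> V" using simple_edge2[OF sg e] by auto
  have csV: "set cs \<subseteq> V" using cs unfolding is_cycle_alt by simp
  have uV: "u \<in> V" using u csV by blast
  let ?V' = "V - {x}" and ?E' = "{g \<in> E. x \<notin> g}"
  have "(R ?V' ?E')\<^sup>*\<^sup>* y u" using two_conn_del[OF tc xy(2) xy(3) uV] xy ux by auto
  then obtain P where P: "walk ?V' ?E' P y u" "distinct P"
    using rtranclp_path[of ?V' ?E' y u] xy by blast
  have Pp: "P \<noteq> []" "hd P = y" "last P = u" "set P \<subseteq> ?V'" "pedges P \<subseteq> ?E'"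
    using P(1) unfolding walk_def by simp_all
  have "\<exists>t\<in>set P. t \<in> set cs" using Pp(1,3) u last_in_set by metis
  then obtain pre z post where Ps: "P = pre @ z # post" and z: "z \<in> set cs"
      and pre: "\<forall>t\<in>set pre. t \<notin> set cs"
    using split_list_first_prop[of P "\<lambda>t. t \<in> set cs"] by blast
  have pre_ne: "pre \<noteq> []"
  proof
    assume "pre = []"
    then have "hd P = z" using Ps by simp
    then show False using Pp(2) z y by simp
  qed
  have hpre: "hd pre = y" using Pp(2) Ps pre_ne by simp
  have PP: "P = (pre @ [z]) @ post" using Ps by simp
  have dpz: "distinct (pre @ [z])" using P(2) PP by (metis distinct_append)
  have spz: "set (pre @ [z]) \<subseteq> V - {x}" using Pp(4) PP by auto
  have epz: "pedges (pre @ [z]) \<subseteq> E"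
  proof -
    have "pedges (pre @ [z]) \<subseteq> pedges P" using PP pedges_append_sub1 by metis
    then show ?thesis using Pp(5) by blast
  qed
  have zx: "z \<noteq> x" using spz by auto
  have xpre: "x \<notin> set pre" using spz by auto
  have zpre: "z \<notin> set pre" using dpz by simp
  obtain rest where C: "is_cycle V E (x # rest)" "set (x # rest) = set cs" "cycle_edges (x # rest) = cycle_edges cs"
    using is_cycle_rotate_front[OF cs x] by blast
  have "z \<in> set rest" using z zx C(2) by auto
  then obtain r1 r2 where rest: "rest = r1 @ z # r2" using split_list by metis
  let ?C = "x # r1 @ z # r2"
  have Cc: "is_cycle V E ?C" using C(1) rest by simp
  have dC: "distinct ?C" using Cc unfolding is_cycle_alt by simp
  have sC: "set ?C = set cs" using C(2) rest by simp
  have ceC: "cycle_edges ?C \<subseteq> E" using Cc unfolding is_cycle_alt by simp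
  have ceC2: "cycle_edges ?C = insert {last (z # r2), x} (pedges ?C)"
  proof -
    have "last ?C = last (z # r2)" by (simp add: last_append)
    moreover have "cycle_edges ?C = insert {last ?C, hd ?C} (pedges ?C)"
      by (rule cycle_edges_alt) simp
    ultimately show ?thesis by simp
  qed
  have peC: "pedges ?C = pedges (x # r1) \<union> pedges (z # r2) \<union> {{last (x # r1), z}}"
    using pedges_append[of "x # r1" "z # r2"] by simp
  have E1: "pedges (x # r1) \<subseteq> E" "pedges (z # r2) \<subseteq> E" "{last (x # r1), z} \<in> E"
    "{last (z # r2), x} \<in> E"
    using ceC ceC2 peC by blast+
  have pre_cs: "set pre \<inter> set ?C = {}" using pre sC by auto
  have "u \<in> set ?C" using u sC by simp
  then have "u \<in> set r1 \<or> u \<in> set (z # r2)" using ux by auto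
  then show ?thesis
  proof
    assume ur: "u \<in> set (z # r2)"
    let ?N = "x # pre @ z # r2"
    have d: "distinct ?N"
      using dC dpz xpre zx pre_cs by auto
    have l: "3 \<le> length ?N" using pre_ne by (cases pre) auto
    have s: "set ?N \<subseteq> V" using spz sC csV by auto
    have pe: "pedges ?N = insert {x, y} (pedges (pre @ [z]) \<union> pedges (z # r2))"
    proof -
      have "pedges ?N = insert {x, hd (pre @ z # r2)} (pedges (pre @ z # r2))"
        by (rule pedges_Cons) simp
      also have "hd (pre @ z # r2) = y" using hpre pre_ne by simp
      also have "pedges (pre @ z # r2) = pedges pre \<union> pedges (z # r2) \<union> {{last pre, z}}"
        using pedges_append[of pre "z # r2"] pre_ne by simp
      also have "pedges (pre @ [z]) = pedges pre \<union> {{last pre, z}}"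
        using pedges_append[of pre "[z]"] pre_ne by simp
      ultimately show ?thesis by auto
    qed
    have pN: "pedges ?N \<subseteq> E" using pe e epz E1 by auto
    have cl: "{last ?N, hd ?N} \<in> E" using E1(4) by simp
    have "is_cycle V E ?N" by (rule mk_cycle[OF d l s pN cl])
    moreover have "u \<in> set ?N" "y \<in> set ?N" using ur hpre pre_ne by auto
    ultimately show ?thesis by blast
  next
    assume ur: "u \<in> set r1"
    let ?N = "(x # r1) @ z # rev pre"
    have d: "distinct ?N"
      using dC dpz xpre zx pre_cs by auto
    have l: "3 \<le> length ?N" using pre_ne by (cases pre) auto
    have s: "set ?N \<subseteq> V" using spz sC csV by auto
    have pe: "pedges ?N = pedges (x # r1) \<union> pedges (pre @ [z]) \<union> {{last (x # r1), z}}"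
    proof -
      have "pedges ?N = pedges (x # r1) \<union> pedges (z # rev pre) \<union> {{last (x # r1), z}}"
        using pedges_append[of "x # r1" "z # rev pre"] by simp
      moreover have "pedges (z # rev pre) = pedges (pre @ [z])"
        using pedges_rev[of "pre @ [z]"] by simp
      ultimately show ?thesis by simp
    qed
    have pN: "pedges ?N \<subseteq> E" using pe epz E1 by auto
    have "last ?N = y" using hpre pre_ne by (simp add: last_rev)
    moreover have "hd ?N = x" by simp
    moreover have "{y, x} = {x, y}" by blast
    ultimately have cl: "{last ?N, hd ?N} \<in> E" using e by simp
    have "is_cycle V E ?N" by (rule mk_cycle[OF d l s pN cl])
    moreover have "u \<in> set ?N" "y \<in> set ?N" using ur hpre pre_ne by auto
    ultimately show ?thesis by blast
  qed
qed

lemma whitney: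
  assumes sg: "simple_graph V E" and tc: "two_connected V E"
    and u: "u \<in> V" and v: "v \<in> V" and uv: "u \<noteq> v"
  shows "\<exists>vs. is_cycle V E vs \<and> u \<in> set vs \<and> v \<in> set vs"
proof -
  have r: "(R V E)\<^sup>*\<^sup>* u v" using two_conn_R[OF tc u v] .
  have "t = u \<or> (\<exists>vs. is_cycle V E vs \<and> u \<in> set vs \<and> t \<in> set vs)" if "(R V E)\<^sup>*\<^sup>* u t" for t
    using that
  proof (induction rule: rtranclp_induct)
    case base then show ?case by simp
  next
    case (step s t)
    have st: "{s, t} \<in> E" using step(2) unfolding R_def adj_def by simp
    show ?case
    proof (cases "t = u")
      case True then show ?thesis by simp
    next
      case tu: False
      show ?thesis
      proof (cases "s = u")
        case True
        then show ?thesis using edge_cycle[OF sg tc] st by blast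
      next
        case False
        then obtain cs where cs: "is_cycle V E cs" "u \<in> set cs" "s \<in> set cs" using step(3) by blast
        show ?thesis
        proof (cases "t \<in> set cs")
          case True then show ?thesis using cs by blast
        next
          case tn: False
          show ?thesis using extend_cycle[OF sg tc cs(1) cs(2) cs(3) _ st tn] False by auto
        qed
      qed
    qed
  qed
  then show ?thesis using r uv by blast
qed

definition sep :: "'a set \<Rightarrow> 'a set set \<Rightarrow> 'a set \<Rightarrow> 'a set \<Rightarrow> 'a set \<Rightarrow> 'a set \<Rightarrow> bool" where
  "sep V E e A B W \<longleftrightarrow> A \<inter> B = {} \<and> A \<inter> W = {} \<and> B \<inter> W = {} \<and> A \<union> B \<union> W = V \<and>
     (\<exists>w. W \<subseteq> {w}) \<and> (\<exists>a\<in>e. a \<in> A) \<and> (\<exists>b\<in>e. b \<in> B) \<and>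
     (\<forall>g\<in>E. \<forall>s\<in>g. \<forall>t\<in>g. s \<in> A \<longrightarrow> t \<in> B \<longrightarrow> g = e)"

definition forced :: "'a set \<Rightarrow> 'a set set \<Rightarrow> 'a set \<Rightarrow> 'a \<Rightarrow> 'a \<Rightarrow> bool" where
  "forced V E g p q \<longleftrightarrow> (\<forall>vs. is_cycle V E vs \<and> p \<in> set vs \<and> q \<in> set vs \<longrightarrow> g \<in> cycle_edges vs)"

lemma forced_sym: "forced V E g p q \<Longrightarrow> forced V E g q p"
  unfolding forced_def by blast

lemma sepD:
  assumes "sep V E e A B W"
  shows "A \<inter> B = {}" "A \<inter> W = {}" "B \<inter> W = {}" "A \<union> B \<union> W = V"
     "\<exists>w. W \<subseteq> {w}" "\<exists>a\<in>e. a \<in> A" "\<exists>b\<in>e. b \<in> B"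
     "\<forall>g\<in>E. \<forall>s\<in>g. \<forall>t\<in>g. s \<in> A \<longrightarrow> t \<in> B \<longrightarrow> g = e"
  using assms unfolding sep_def by simp_all

lemma sep_sym:
  assumes "sep V E e A B W" shows "sep V E e B A W"
proof -
  note c = sepD[OF assms]
  show ?thesis unfolding sep_def
  proof (intro conjI)
    show "B \<inter> A = {}" using c(1) by blast
    show "B \<inter> W = {}" using c(3) .
    show "A \<inter> W = {}" using c(2) .
    show "B \<union> A \<union> W = V" using c(4) by blast
    show "\<exists>w. W \<subseteq> {w}" using c(5) .
    show "\<exists>a\<in>e. a \<in> B" using c(7) .
    show "\<exists>a\<in>e. a \<in> A" using c(6) .
    show "\<forall>g\<in>E. \<forall>s\<in>g. \<forall>t\<in>g. s \<in> B \<longrightarrow> t \<in> A \<longrightarrow> g = e" using c(8) by blast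
  qed
qed

lemma sep_edge:
  assumes sg: "simple_graph V E" and s: "sep V E e A B W" and e: "e \<in> E"
  shows "\<exists>u v. e = {u, v} \<and> u \<in> A \<and> v \<in> B"
proof -
  obtain u v where uv: "u \<noteq> v" "e = {u, v}" using simple_edge[OF sg e] by blast
  have "\<exists>a\<in>e. a \<in> A" "\<exists>b\<in>e. b \<in> B" "A \<inter> B = {}" using sepD[OF s] by simp_all
  then have "(u \<in> A \<and> v \<in> B) \<or> (v \<in> A \<and> u \<in> B)" using uv by blast
  then show ?thesis using uv by (metis insert_commute)
qed

lemma crossD:
  assumes "\<forall>g\<in>E. \<forall>s\<in>g. \<forall>t\<in>g. s \<in> A \<longrightarrow> t \<in> B \<longrightarrow> g = e" "{s, t} \<in> E" "s \<in> A" "t \<in> B"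
  shows "{s, t} = e"
proof -
  have "s \<in> {s, t}" "t \<in> {s, t}" by simp_all
  then show ?thesis using assms by (meson insertI1)
qed

lemma side_const:
  assumes "pedges L \<subseteq> E - {e}" "set L \<subseteq> A \<union> B" "A \<inter> B = {}"
    "\<forall>g\<in>E. \<forall>s\<in>g. \<forall>t\<in>g. s \<in> A \<longrightarrow> t \<in> B \<longrightarrow> g = e"
  shows "set L \<subseteq> A \<or> set L \<subseteq> B"
  using assms
proof (induction L rule: pedges.induct)
  case (1 a b xs)
  have p1: "pedges (b # xs) \<subseteq> E - {e}" using "1.prems"(1) by simp
  have p2: "set (b # xs) \<subseteq> A \<union> B" using "1.prems"(2) by simp
  have ih: "set (b # xs) \<subseteq> A \<or> set (b # xs) \<subseteq> B" by (rule "1.IH"[OF p1 p2 "1.prems"(3,4)])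
  have "{a, b} \<in> pedges (a # b # xs)" by simp
  then have abE: "{a, b} \<in> E - {e}" using "1.prems"(1) by (rule subsetD[rotated])
  have ab1: "{a, b} \<in> E" using abE by (rule DiffD1)
  have ab3: "{a, b} \<noteq> e"
  proof
    assume "{a, b} = e"
    then show False using abE by simp
  qed
  note ab = ab1 ab3
  have n1: "\<not> (a \<in> A \<and> b \<in> B)" using crossD[OF "1.prems"(4) ab(1)] ab(2) by blast
  have ba: "{b, a} \<in> E" "{b, a} \<noteq> e" using ab by (simp_all add: insert_commute)
  have n2: "\<not> (b \<in> A \<and> a \<in> B)" using crossD[OF "1.prems"(4) ba(1)] ba(2) by blast
  have "a \<in> A \<union> B" "b \<in> A \<union> B" using "1.prems"(2) by simp_all
  then have side: "(a \<in> A \<and> b \<in> A) \<or> (a \<in> B \<and> b \<in> B)" using n1 n2 by blast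
  show ?case
  proof (cases "set (b # xs) \<subseteq> A")
    case True
    then have "b \<in> A" by simp
    then have "b \<notin> B" using "1.prems"(3) by blast
    then have "a \<in> A" using side by blast
    then show ?thesis using True by simp
  next
    case False
    then have F: "set (b # xs) \<subseteq> B" using ih by blast
    then have "b \<in> B" by simp
    then have "b \<notin> A" using "1.prems"(3) by blast
    then have "a \<in> B" using side by blast
    then show ?thesis using F by simp
  qed
next
  case "2_1" show ?case by simp
next
  case ("2_2" a) show ?case using "2_2.prems"(2) by simp
qed

lemma sep_force:
  assumes s: "sep V E e A B W" and p: "p \<in> A" and q: "q \<in> B"
  shows "forced V E e p q"
  unfolding forced_def
proof (intro allI impI)
  fix vs assume vs: "is_cycle V E vs \<and> p \<in> set vs \<and> q \<in> set vs"
  show "e \<in> cycle_edges vs"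
  proof (rule ccontr)
    assume ne: "e \<notin> cycle_edges vs"
    note sd = sepD[OF s]
    note AB = sd(1) and cr = sd(8) and U = sd(4) and AW = sd(2) and BW = sd(3) and W1 = sd(5)
    have cyc: "is_cycle V E vs" using vs by simp
    have ceE: "cycle_edges vs \<subseteq> E - {e}" using cyc ne unfolding is_cycle_alt by blast
    show False
    proof (cases "set vs \<inter> W = {}")
      case True
      have "vs \<noteq> []" using vs by auto
      then have "pedges vs \<subseteq> E - {e}" using ceE by (simp add: cycle_edges_alt)
      moreover have "set vs \<subseteq> A \<union> B" using True U cyc unfolding is_cycle_alt by blast
      ultimately have "set vs \<subseteq> A \<or> set vs \<subseteq> B" using side_const[OF _ _ AB cr] by blast
      then show False using vs p q AB by blast
    next
      case False
      then obtain w where w: "w \<in> set vs" "w \<in> W" by blast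
      obtain ys where c: "is_cycle V E (w # ys)" "set (w # ys) = set vs" "cycle_edges (w # ys) = cycle_edges vs"
        using is_cycle_rotate_front[OF cyc w(1)] by blast
      have "pedges (w # ys) \<subseteq> cycle_edges (w # ys)" using cycle_edges_alt[of "w # ys"] by blast
      then have "pedges (w # ys) \<subseteq> E - {e}" using ceE c(3) by blast
      moreover have "pedges ys \<subseteq> pedges (w # ys)" by (cases ys) auto
      ultimately have pe: "pedges ys \<subseteq> E - {e}" by blast
      have dw: "w \<notin> set ys" using c(1) unfolding is_cycle_alt by simp
      have WW: "W \<subseteq> {w}" using W1 w(2) by blast
      have "set ys \<subseteq> V" using c(1) unfolding is_cycle_alt by simp
      then have "set ys \<subseteq> A \<union> B" using U dw WW by blast
      then have "set ys \<subseteq> A \<or> set ys \<subseteq> B" using side_const[OF pe _ AB cr] by blast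
      moreover have "p \<in> set ys" "q \<in> set ys" using vs c(2) p q AW BW w(2) by auto
      ultimately show False using p q AB by blast
    qed
  qed
qed

lemma sep_nbr:
  assumes sg: "simple_graph V E" and tc: "two_connected V E"
    and s: "sep V E e A B W" and e: "e \<in> E" and w: "w \<in> W"
  shows "\<exists>z\<in>B. {w, z} \<in> E"
proof -
  obtain a b where ab: "e = {a, b}" "a \<in> A" "b \<in> B" using sep_edge[OF sg s e] by blast
  note sd = sepD[OF s]
  note AB = sd(1) and cr = sd(8) and U = sd(4) and AW = sd(2) and BW = sd(3) and W1 = sd(5)
  have aV: "a \<in> V" "b \<in> V" "w \<in> V" using ab w U by blast+
  have "a \<noteq> w" "b \<noteq> w" using ab w AW BW by blast+
  then have "(R (V - {a}) {g \<in> E. a \<notin> g})\<^sup>*\<^sup>* b w"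
    using two_conn_del[OF tc aV(1) aV(2) aV(3)] ab AB by blast
  then obtain s t where st: "s \<in> B" "t \<notin> B" "R (V - {a}) {g \<in> E. a \<notin> g} s t"
    using exit_lemma[of _ b w B] ab w BW by blast
  have stE: "{s, t} \<in> E" "a \<notin> {s, t}" "t \<in> V" using st(3) unfolding R_def adj_def by auto
  have "t \<notin> A"
  proof
    assume "t \<in> A"
    moreover have "{t, s} \<in> E" using stE(1) by (simp add: insert_commute)
    ultimately have "{t, s} = e" using crossD[OF cr] st(1) by blast
    then show False using stE ab by blast
  qed
  then have "t \<in> W" using stE U st(2) by blast
  then have "t = w" using W1 w by blast
  moreover have "{t, s} = {s, t}" by blast
  ultimately show ?thesis using st(1) stE by metis
qed

lemma sep_single:
  assumes sg: "simple_graph V E" and s: "sep V E e A B W" and B: "B = {b}" and bt: "{b, t} \<in> E"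
  shows "t \<in> e \<or> t \<in> W"
proof -
  note sd = sepD[OF s]
  note AB = sd(1) and cr = sd(8) and U = sd(4)
  have t: "t \<in> V" "b \<noteq> t" using simple_edge2[OF sg bt] by auto
  consider "t \<in> A" | "t \<in> B" | "t \<in> W" using t U by blast
  then show ?thesis
  proof cases
    case 1
    moreover have "{t, b} \<in> E" using bt by (simp add: insert_commute)
    ultimately have "{t, b} = e" using crossD[OF cr] B by blast
    then show ?thesis by blast
  next
    case 2 then show ?thesis using B t by blast
  qed blast
qed

lemma other_nbr:
  assumes sg: "simple_graph V E" and tc: "two_connected V E"
    and y: "y \<in> V" and x: "x \<in> V" and xy: "x \<noteq> y"
  shows "\<exists>t. t \<noteq> x \<and> {y, t} \<in> E"
proof -
  have fin: "finite V" "card V \<ge> 3" using sg tc unfolding simple_graph_def two_connected_def by auto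
  obtain w where w: "w \<in> V" "w \<noteq> x" "w \<noteq> y" using third_vertex[OF fin] by blast
  have "(R (V - {x}) {g \<in> E. x \<notin> g})\<^sup>*\<^sup>* y w" using two_conn_del[OF tc x y w(1)] xy w by auto
  then obtain s t where "s \<in> {y}" "t \<notin> {y}" "R (V - {x}) {g \<in> E. x \<notin> g} s t"
    using exit_lemma[of _ y w "{y}"] w by blast
  then have "s = y" "t \<noteq> x" "{y, t} \<in> E" unfolding R_def adj_def by auto
  then show ?thesis by blast
qed

lemma card2_eq:
  assumes "card g = 2" "s \<in> g" "t \<in> g" "s \<noteq> t"
  shows "g = {s, t}"
proof -
  have fin: "finite g" using assms(1) by (metis card.infinite zero_neq_numeral)
  have "{s, t} \<subseteq> g" using assms by blast
  moreover have "card {s, t} = 2" using assms(4) by simp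
  ultimately show ?thesis using card_subset_eq[OF fin] assms(1) by metis
qed

lemma sep_gen:
  assumes sg: "simple_graph V E" and eE: "e \<in> E" and WV: "W \<subseteq> V" and W1: "\<exists>w. W \<subseteq> {w}"
    and conn: "\<forall>a\<in>V - W. \<forall>b\<in>V - W. (R (V - W) {g \<in> E. g \<inter> W = {}})\<^sup>*\<^sup>* a b"
    and a0: "a0 \<in> V - W" and b0: "b0 \<in> V - W"
    and disc: "\<not> (R (V - W) {g \<in> E - {e}. g \<inter> W = {}})\<^sup>*\<^sup>* a0 b0"
  shows "\<exists>A B. sep V E e A B W"
proof -
  let ?R' = "R (V - W) {g \<in> E - {e}. g \<inter> W = {}}"
  define A where "A = {z \<in> V - W. ?R'\<^sup>*\<^sup>* a0 z}"
  define B where "B = (V - W) - A"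
  have step: "t \<in> A" if "s \<in> A" "t \<in> V - W" "{s, t} \<in> E" "{s, t} \<noteq> e" "s \<notin> W" "t \<notin> W" for s t
  proof -
    have "{s, t} \<inter> W = {}" using that(5,6) by blast
    then have "?R' s t" using that unfolding R_def adj_def A_def by auto
    then show ?thesis using that(1,2) unfolding A_def by (auto intro: rtranclp.rtrancl_into_rtrancl)
  qed
  have cr: "\<forall>g\<in>E. \<forall>s\<in>g. \<forall>t\<in>g. s \<in> A \<longrightarrow> t \<in> B \<longrightarrow> g = e"
  proof (intro ballI impI)
    fix g s t assume g: "g \<in> E" "s \<in> g" "t \<in> g" "s \<in> A" "t \<in> B"
    show "g = e"
    proof (rule ccontr)
      assume ne: "g \<noteq> e"
      have st: "s \<noteq> t" using g(4,5) unfolding B_def by blast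
      have "card g = 2" using sg g(1) unfolding simple_graph_def by auto
      then have gst: "g = {s, t}" by (rule card2_eq[OF _ g(2) g(3) st])
      have tVW: "t \<in> V - W" using g(5) unfolding B_def by blast
      have sVW: "s \<in> V - W" using g(4) unfolding A_def by blast
      have "{s, t} \<in> E" "{s, t} \<noteq> e" using g(1) ne gst by simp_all
      then have "t \<in> A" using step[of s t] g(4) tVW sVW by blast
      then show False using g(5) unfolding B_def by blast
    qed
  qed
  have a0A: "a0 \<in> A" using a0 unfolding A_def by simp
  have b0A: "b0 \<notin> A" using disc unfolding A_def by simp
  obtain s t where st: "s \<in> A" "t \<notin> A" "R (V - W) {g \<in> E. g \<inter> W = {}} s t"
    using exit_lemma[OF _ a0A b0A] conn a0 b0 by blast
  have stE: "{s, t} \<in> E" "{s, t} \<inter> W = {}" "t \<in> V - W" "s \<in> V - W"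
    using st(3) unfolding R_def adj_def by auto
  have tB: "t \<in> B" using stE st(2) unfolding B_def by blast
  have "{s, t} = e"
  proof (rule ccontr)
    assume "{s, t} \<noteq> e"
    then have "t \<in> A" using step[of s t] st(1) stE by blast
    then show False using st(2) by blast
  qed
  then have ea: "\<exists>a\<in>e. a \<in> A" "\<exists>b\<in>e. b \<in> B" using st(1) tB by blast+
  have "sep V E e A B W"
    unfolding sep_def
  proof (intro conjI)
    show "A \<inter> B = {}" unfolding B_def by blast
    show "A \<inter> W = {}" unfolding A_def by blast
    show "B \<inter> W = {}" unfolding B_def by blast
    show "A \<union> B \<union> W = V" using WV unfolding A_def B_def by blast
  qed (fact W1 ea cr)+
  then show ?thesis by blast
qed

lemma sep_exists:
  assumes sg: "simple_graph V E" and tc: "two_connected V E" and eE: "e \<in> E"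
    and nt: "\<not> two_connected V (E - {e})"
  shows "\<exists>A B W. sep V E e A B W"
proof -
  have c3: "card V \<ge> 3" and fin: "finite V" using tc sg unfolding two_connected_def simple_graph_def by auto
  have "\<not> connected V (E - {e}) \<or> (\<exists>w\<in>V. \<not> connected (V - {w}) {g \<in> E - {e}. w \<notin> g})"
    using nt c3 unfolding two_connected_def by blast
  then show ?thesis
  proof
    assume nc: "\<not> connected V (E - {e})"
    have Vne: "V \<noteq> {}" using c3 by auto
    then obtain a0 b0 where ab: "a0 \<in> V" "b0 \<in> V" "\<not> (R V (E - {e}))\<^sup>*\<^sup>* a0 b0"
      using nc unfolding connected_R by blast
    have e1: "{g \<in> E - {e}. g \<inter> {} = {}} = E - {e}" by blast
    have e2: "{g \<in> E. g \<inter> {} = {}} = E" by blast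
    have conn: "\<forall>a\<in>V - {}. \<forall>b\<in>V - {}. (R (V - {}) {g \<in> E. g \<inter> {} = {}})\<^sup>*\<^sup>* a b"
      using two_conn_R[OF tc] unfolding e2 by simp
    have "\<exists>A B. sep V E e A B {}"
      by (rule sep_gen[OF sg eE _ _ conn]) (use ab e1 in auto)
    then show ?thesis by blast
  next
    assume "\<exists>w\<in>V. \<not> connected (V - {w}) {g \<in> E - {e}. w \<notin> g}"
    then obtain w where w: "w \<in> V" "\<not> connected (V - {w}) {g \<in> E - {e}. w \<notin> g}" by blast
    have "V - {w} \<noteq> {}" using third_vertex[OF fin c3, of w w] by blast
    then obtain a0 b0 where ab: "a0 \<in> V - {w}" "b0 \<in> V - {w}" "\<not> (R (V - {w}) {g \<in> E - {e}. w \<notin> g})\<^sup>*\<^sup>* a0 b0"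
      using w(2) unfolding connected_R by blast
    have e1: "{g \<in> E - {e}. g \<inter> {w} = {}} = {g \<in> E - {e}. w \<notin> g}" by blast
    have e2: "{g \<in> E. g \<inter> {w} = {}} = {g \<in> E. w \<notin> g}" by blast
    have conn: "\<forall>a\<in>V - {w}. \<forall>b\<in>V - {w}. (R (V - {w}) {g \<in> E. g \<inter> {w} = {}})\<^sup>*\<^sup>* a b"
      unfolding e2 using two_conn_del[OF tc w(1)] by blast
    have "\<exists>A B. sep V E e A B {w}"
      by (rule sep_gen[OF sg eE _ _ conn]) (use ab e1 w in auto)
    then show ?thesis by blast
  qed
qed

definition good :: "'a set \<Rightarrow> 'a set set \<Rightarrow> 'a set \<Rightarrow> 'a set \<Rightarrow> 'a \<Rightarrow> 'a \<Rightarrow> bool" where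
  "good V E e f p q \<longleftrightarrow> p \<in> V \<and> q \<in> V \<and> p \<noteq> q \<and> forced V E e p q \<and> forced V E f p q"

lemma good_swap: "good V E e f p q \<Longrightarrow> good V E f e p q"
  unfolding good_def by simp

lemma pair_ok:
  assumes se: "sep V E e Ae Be We" and sf: "sep V E f Af Bf Wf"
    and p: "p \<in> Ae" and q: "q \<in> Be" and pq: "(p \<in> Af \<and> q \<in> Bf) \<or> (p \<in> Bf \<and> q \<in> Af)"
  shows "\<exists>p q. good V E e f p q"
proof -
  note sd = sepD[OF se]
  have V: "p \<in> V" "q \<in> V" using sd(4) p q by blast+
  have ne: "p \<noteq> q" using sd(1) p q by blast
  have fe: "forced V E e p q" by (rule sep_force[OF se p q])
  have ff: "forced V E f p q"
    using pq
  proof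
    assume "p \<in> Af \<and> q \<in> Bf"
    then show ?thesis using sep_force[OF sf] by blast
  next
    assume "p \<in> Bf \<and> q \<in> Af"
    then have "forced V E f q p" using sep_force[OF sf] by blast
    then show ?thesis by (rule forced_sym)
  qed
  show ?thesis using V ne fe ff unfolding good_def by blast
qed

lemma thru_force:
  assumes sf: "sep V E f A B W" and nb: "\<forall>t. {b, t} \<in> E \<longrightarrow> t = s1 \<or> t = s2"
    and s1: "s1 \<in> A" and s2: "s2 \<in> B"
  shows "forced V E f b q"
  unfolding forced_def
proof (intro allI impI)
  fix vs assume vs: "is_cycle V E vs \<and> b \<in> set vs \<and> q \<in> set vs"
  then have "s1 \<in> set vs \<and> s2 \<in> set vs" using cycle_thru[of V E vs b s1 s2] nb by blast
  then show "f \<in> cycle_edges vs" using sep_force[OF sf s1 s2] vs unfolding forced_def by blast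
qed

lemma C2:
  assumes sg: "simple_graph V E" and tc: "two_connected V E" and eE: "e \<in> E" and fE: "f \<in> E"
    and se: "sep V E e Ae Be We" and sf: "sep V E f Af Bf Wf"
    and eB: "e \<inter> Bf = {}" and fB: "f \<inter> Be = {}"
    and e: "e = {u, v}" "u \<in> Ae" "v \<in> Be" and f: "f = {x, y}" "x \<in> Af" "y \<in> Bf"
    and vA: "v \<in> Af" and yW: "y \<in> We"
  shows "\<exists>p q. good V E e f p q"
proof -
  note sd = sepD[OF se] and sfd = sepD[OF sf]
  have xy: "x \<noteq> y" "x \<in> V" "y \<in> V" using simple_edge2[OF sg] fE f(1) by auto
  obtain w where wW: "We \<subseteq> {w}" using sd(5) by blast
  have Wey: "We = {y}" using wW yW by blast
  have xBe: "x \<notin> Be" using fB f(1) by blast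
  have xWe: "x \<notin> We" using Wey xy(1) by blast
  have xA: "x \<in> Ae" using xy(2) xBe xWe sd(4) by blast
  show ?thesis
  proof (cases "\<exists>z. z \<in> Bf \<and> z \<in> Ae")
    case True
    then obtain z where z: "z \<in> Bf" "z \<in> Ae" by blast
    show ?thesis by (rule pair_ok[OF se sf z(2) e(3)]) (use z vA in blast)
  next
    case nA: False
    show ?thesis
    proof (cases "\<exists>z. z \<in> Bf \<and> z \<in> Be")
      case True
      then obtain z where z: "z \<in> Bf" "z \<in> Be" by blast
      show ?thesis by (rule pair_ok[OF se sf xA z(2)]) (use z f(2) in blast)
    next
      case nB: False
      have "Bf \<subseteq> V" using sfd(4) by blast
      then have "Bf \<subseteq> We" using nA nB sd(4) by blast
      then have Bfy: "Bf = {y}" using Wey f(3) by blast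
      obtain t where t: "t \<noteq> x" "{y, t} \<in> E" using other_nbr[OF sg tc xy(3) xy(2) xy(1)] by blast
      have ty: "t \<noteq> y" "t \<in> V" using simple_edge2[OF sg t(2)] by auto
      have "t \<in> f \<or> t \<in> Wf" by (rule sep_single[OF sg sf Bfy t(2)])
      then have tW: "t \<in> Wf" using t(1) ty(1) f(1) by blast
      obtain w' where w': "Wf \<subseteq> {w'}" using sfd(5) by blast
      have nb: "\<forall>t'. {y, t'} \<in> E \<longrightarrow> t' = x \<or> t' = t"
      proof (intro allI impI)
        fix t' assume t': "{y, t'} \<in> E"
        have "t' \<noteq> y" using simple_edge2[OF sg t'] by auto
        moreover have "t' \<in> f \<or> t' \<in> Wf" by (rule sep_single[OF sg sf Bfy t'])
        ultimately show "t' = x \<or> t' = t" using f(1) tW w' by blast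
      qed
      have tWe: "t \<notin> We" using Wey ty(1) by blast
      have "t \<in> Ae \<or> t \<in> Be" using ty(2) tWe sd(4) by blast
      then show ?thesis
      proof
        assume tB: "t \<in> Be"
        have fe: "forced V E e y x" by (rule thru_force[OF se nb xA tB])
        have ff: "forced V E f y x" by (rule sep_force[OF sep_sym[OF sf] f(3) f(2)])
        have "good V E e f y x" unfolding good_def using fe ff xy by blast
        then show ?thesis by blast
      next
        assume tA: "t \<in> Ae"
        obtain z where z: "z \<in> Be" "{y, z} \<in> E" using sep_nbr[OF sg tc se eE yW] by blast
        have "z = x \<or> z = t" using nb z(2) by blast
        then have "z \<in> Ae" using xA tA by blast
        then show ?thesis using z(1) sd(1) by blast
      qed
    qed
  qed
qed

lemma C4c:
  assumes sg: "simple_graph V E" and tc: "two_connected V E" and eE: "e \<in> E" and fE: "f \<in> E"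
    and se: "sep V E e Ae Be We" and sf: "sep V E f Af Bf Wf"
    and eB: "e \<inter> Bf = {}" and fB: "f \<inter> Be = {}"
    and e: "e = {u, v}" "u \<in> Ae" "v \<in> Be" and f: "f = {x, y}" "x \<in> Af" "y \<in> Bf"
    and vW: "v \<in> Wf" and yW: "y \<in> We"
    and h1: "Be \<inter> Bf = {}" and h2: "Be \<inter> Af = {}"
  shows "\<exists>p q. good V E e f p q"
proof -
  note sd = sepD[OF se] and sfd = sepD[OF sf]
  have uv: "u \<noteq> v" "u \<in> V" "v \<in> V" using simple_edge2[OF sg] eE e(1) by auto
  obtain w where wW: "We \<subseteq> {w}" using sd(5) by blast
  have Wey: "We = {y}" using wW yW by blast
  obtain w' where w': "Wf \<subseteq> {w'}" using sfd(5) by blast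
  have Wfv: "Wf = {v}" using w' vW by blast
  have uBf: "u \<notin> Bf" using eB e(1) by blast
  have uWf: "u \<notin> Wf" using Wfv uv(1) by blast
  have uA: "u \<in> Af" using uv(2) uBf uWf sfd(4) by blast
  have "Be \<subseteq> V" using sd(4) by blast
  then have "Be \<subseteq> Wf" using h1 h2 sfd(4) by blast
  then have Bev: "Be = {v}" using Wfv e(3) by blast
  have nb: "\<forall>t. {v, t} \<in> E \<longrightarrow> t = u \<or> t = y"
  proof (intro allI impI)
    fix t assume t: "{v, t} \<in> E"
    have "t \<noteq> v" using simple_edge2[OF sg t] by auto
    moreover have "t \<in> e \<or> t \<in> We" by (rule sep_single[OF sg se Bev t])
    ultimately show "t = u \<or> t = y" using e(1) Wey by blast
  qed
  have fe: "forced V E e v u" by (rule sep_force[OF sep_sym[OF se] e(3) e(2)])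
  have ff: "forced V E f v u" by (rule thru_force[OF sf nb uA f(3)])
  have "good V E e f v u" unfolding good_def using fe ff uv by blast
  then show ?thesis by blast
qed

lemma C4:
  assumes sg: "simple_graph V E" and tc: "two_connected V E" and eE: "e \<in> E" and fE: "f \<in> E"
    and se: "sep V E e Ae Be We" and sf: "sep V E f Af Bf Wf"
    and eB: "e \<inter> Bf = {}" and fB: "f \<inter> Be = {}"
    and e: "e = {u, v}" "u \<in> Ae" "v \<in> Be" and f: "f = {x, y}" "x \<in> Af" "y \<in> Bf"
    and vW: "v \<in> Wf" and yW: "y \<in> We"
  shows "\<exists>p q. good V E e f p q"
proof -
  note sd = sepD[OF se] and sfd = sepD[OF sf]
  have uv: "u \<noteq> v" "u \<in> V" "v \<in> V" using simple_edge2[OF sg] eE e(1) by auto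
  have xy: "x \<noteq> y" "x \<in> V" "y \<in> V" using simple_edge2[OF sg] fE f(1) by auto
  obtain w where wW: "We \<subseteq> {w}" using sd(5) by blast
  obtain w' where w': "Wf \<subseteq> {w'}" using sfd(5) by blast
  have uA: "u \<in> Af"
  proof -
    have "u \<notin> Bf" using eB e(1) by blast
    moreover have "u \<notin> Wf" using w' vW uv(1) by blast
    ultimately show ?thesis using uv(2) sfd(4) by blast
  qed
  have xA: "x \<in> Ae"
  proof -
    have "x \<notin> Be" using fB f(1) by blast
    moreover have "x \<notin> We" using wW yW xy(1) by blast
    ultimately show ?thesis using xy(2) sd(4) by blast
  qed
  show ?thesis
  proof (cases "\<exists>z. z \<in> Be \<and> z \<in> Bf")
    case True
    then obtain z where z: "z \<in> Be" "z \<in> Bf" by blast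
    show ?thesis by (rule pair_ok[OF se sf e(2) z(1)]) (use uA z in blast)
  next
    case n1: False
    then have h1: "Be \<inter> Bf = {}" by blast
    show ?thesis
    proof (cases "Be \<inter> Af = {}")
      case True
      show ?thesis by (rule C4c[OF sg tc eE fE se sf eB fB e f vW yW h1 True])
    next
      case n2: False
      show ?thesis
      proof (cases "Bf \<inter> Ae = {}")
        case True
        have h1': "Bf \<inter> Be = {}" using h1 by blast
        have "\<exists>p q. good V E f e p q"
          by (rule C4c[OF sg tc fE eE sf se fB eB f e yW vW h1' True])
        then show ?thesis by (meson good_swap)
      next
        case n3: False
        obtain z where z: "z \<in> Be" "z \<in> Af" using n2 by blast
        obtain z' where z': "z' \<in> Bf" "z' \<in> Ae" using n3 by blast
        show ?thesis by (rule pair_ok[OF se sf z'(2) z(1)]) (use z z' in blast)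
      qed
    qed
  qed
qed

lemma core:
  assumes sg: "simple_graph V E" and tc: "two_connected V E" and eE: "e \<in> E" and fE: "f \<in> E"
    and se: "sep V E e Ae Be We" and sf: "sep V E f Af Bf Wf"
    and eB: "e \<inter> Bf = {}" and fB: "f \<inter> Be = {}"
  shows "\<exists>p q. good V E e f p q"
proof -
  note sd = sepD[OF se] and sfd = sepD[OF sf]
  obtain u v where e: "e = {u, v}" "u \<in> Ae" "v \<in> Be" using sep_edge[OF sg se eE] by blast
  obtain x y where f: "f = {x, y}" "x \<in> Af" "y \<in> Bf" using sep_edge[OF sg sf fE] by blast
  have vV: "v \<in> V" "y \<in> V" using sd(4) sfd(4) e(3) f(3) by blast+
  have "v \<notin> Bf" using eB e(1) by blast
  then have vc: "v \<in> Af \<or> v \<in> Wf" using vV sfd(4) by blast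
  have "y \<notin> Be" using fB f(1) by blast
  then have yc: "y \<in> Ae \<or> y \<in> We" using vV sd(4) by blast
  show ?thesis
  proof (cases "v \<in> Af")
    case vA: True
    show ?thesis
    proof (cases "y \<in> Ae")
      case True
      show ?thesis by (rule pair_ok[OF se sf True e(3)]) (use vA f(3) in blast)
    next
      case False
      then have "y \<in> We" using yc by blast
      then show ?thesis by (rule C2[OF sg tc eE fE se sf eB fB e f vA])
    qed
  next
    case vnA: False
    then have vW: "v \<in> Wf" using vc by blast
    show ?thesis
    proof (cases "y \<in> Ae")
      case True
      have "\<exists>p q. good V E f e p q" by (rule C2[OF sg tc fE eE sf se fB eB f e True vW])
      then show ?thesis by (meson good_swap)
    next
      case False
      then have "y \<in> We" using yc by blast
      then show ?thesis by (rule C4[OF sg tc eE fE se sf eB fB e f vW])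
    qed
  qed
qed

lemma good_pair:
  assumes sg: "simple_graph V E" and tc: "two_connected V E"
    and mn: "\<forall>g\<in>E. \<not> two_connected V (E - {g})"
    and eE: "e \<in> E" and fE: "f \<in> E" and ef: "e \<noteq> f"
  shows "\<exists>p q. good V E e f p q"
proof -
  obtain Ae Be We where se0: "sep V E e Ae Be We" using sep_exists[OF sg tc eE] mn eE by blast
  obtain Af Bf Wf where sf0: "sep V E f Af Bf Wf" using sep_exists[OF sg tc fE] mn fE by blast
  have "e \<inter> Af = {} \<or> e \<inter> Bf = {}"
  proof (rule ccontr)
    assume "\<not> ?thesis"
    then obtain s t where st: "s \<in> e" "s \<in> Af" "t \<in> e" "t \<in> Bf" by blast
    have "\<forall>s\<in>e. \<forall>t\<in>e. s \<in> Af \<longrightarrow> t \<in> Bf \<longrightarrow> e = f" using bspec[OF sepD(8)[OF sf0] eE] .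
    then have "e = f" using st by blast
    then show False using ef by simp
  qed
  then obtain Af' Bf' where sf: "sep V E f Af' Bf' Wf" and eB: "e \<inter> Bf' = {}"
    using sf0 sep_sym[OF sf0] by blast
  have "f \<inter> Ae = {} \<or> f \<inter> Be = {}"
  proof (rule ccontr)
    assume "\<not> ?thesis"
    then obtain s t where st: "s \<in> f" "s \<in> Ae" "t \<in> f" "t \<in> Be" by blast
    have "\<forall>s\<in>f. \<forall>t\<in>f. s \<in> Ae \<longrightarrow> t \<in> Be \<longrightarrow> f = e" using bspec[OF sepD(8)[OF se0] fE] .
    then have "f = e" using st by blast
    then show False using ef by simp
  qed
  then obtain Ae' Be' where se: "sep V E e Ae' Be' We" and fB: "f \<inter> Be' = {}"
    using se0 sep_sym[OF se0] by blast
  show ?thesis by (rule core[OF sg tc eE fE se sf eB fB])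
qed

lemma crx_le:
  assumes "k_rainbow_cycle_colouring k V E c"
  shows "crx k V E \<le> num_colours E c"
  unfolding crx_def by (rule Least_le) (use assms in blast)

lemma crx_ge:
  assumes "k_rainbow_cycle_colouring k V E c0"
    and "\<And>c. k_rainbow_cycle_colouring k V E c \<Longrightarrow> m \<le> num_colours E c"
  shows "m \<le> crx k V E"
proof -
  have "\<exists>c. k_rainbow_cycle_colouring k V E c \<and> num_colours E c = crx k V E"
    unfolding crx_def by (rule LeastI_ex) (use assms(1) in blast)
  then show ?thesis using assms(2) by metis
qed

lemma finite_E: "simple_graph V E \<Longrightarrow> finite E"
proof -
  assume sg: "simple_graph V E"
  then have "E \<subseteq> Pow V" "finite V" unfolding simple_graph_def by auto
  then show ?thesis by (meson finite_Pow_iff finite_subset)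
qed

lemma idx_exists: "finite E \<Longrightarrow> \<exists>idx :: 'a set \<Rightarrow> nat. inj_on idx E"
  using finite_imp_inj_to_nat_seg by blast

lemma num_inj: "inj_on c E \<Longrightarrow> num_colours E c = card E"
  unfolding num_colours_def by (rule card_image)

lemma num_le: "finite E \<Longrightarrow> num_colours E c \<le> card E"
  unfolding num_colours_def by (rule card_image_le)

lemma inj_merge:
  assumes "inj_on idx E" "X \<subseteq> E" "e1 \<in> E" "e2 \<in> E" "e1 \<noteq> e2" "\<not> (e1 \<in> X \<and> e2 \<in> X)"
  shows "inj_on (idx(e2 := idx e1)) X"
proof (cases "e2 \<in> X")
  case False
  have "inj_on idx X" using assms(1,2) inj_on_subset by blast
  moreover have "\<forall>g\<in>X. (idx(e2 := idx e1)) g = idx g" using False by auto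
  ultimately show ?thesis using inj_on_cong by (metis (mono_tags, lifting))
next
  case True
  then have e1X: "e1 \<notin> X" using assms(6) by blast
  show ?thesis
  proof (rule inj_onI)
    fix a b assume ab: "a \<in> X" "b \<in> X" "(idx(e2 := idx e1)) a = (idx(e2 := idx e1)) b"
    have aE: "a \<in> E" "b \<in> E" using ab assms(2) by blast+
    have ne1: "a \<noteq> e1" "b \<noteq> e1" using ab e1X by blast+
    show "a = b"
    proof (cases "a = e2"; cases "b = e2")
      assume "a = e2" "b = e2" then show ?thesis by simp
    next
      assume "a = e2" "b \<noteq> e2"
      then have "idx e1 = idx b" using ab(3) by simp
      then have "e1 = b" using assms(1) assms(3) aE(2) inj_on_eq_iff by metis
      then show ?thesis using ne1 by simp
    next
      assume "a \<noteq> e2" "b = e2"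
      then have "idx a = idx e1" using ab(3) by simp
      then have "a = e1" using assms(1) assms(3) aE(1) inj_on_eq_iff by metis
      then show ?thesis using ne1 by simp
    next
      assume "a \<noteq> e2" "b \<noteq> e2"
      then have "idx a = idx b" using ab(3) by simp
      then show ?thesis using assms(1) aE inj_on_eq_iff by metis
    qed
  qed
qed

lemma num_merge:
  assumes "finite E" "inj_on idx E" "e1 \<in> E" "e2 \<in> E" "e1 \<noteq> e2"
  shows "num_colours E (idx(e2 := idx e1)) < card E"
proof -
  have "(idx(e2 := idx e1)) ` E = idx ` (E - {e2})"
  proof
    show "(idx(e2 := idx e1)) ` E \<subseteq> idx ` (E - {e2})"
    proof
      fix x assume "x \<in> (idx(e2 := idx e1)) ` E"
      then obtain g where g: "g \<in> E" "x = (idx(e2 := idx e1)) g" by blast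
      show "x \<in> idx ` (E - {e2})"
      proof (cases "g = e2")
        case True then show ?thesis using g assms(3,5) by auto
      next
        case False then show ?thesis using g by auto
      qed
    qed
  next
    show "idx ` (E - {e2}) \<subseteq> (idx(e2 := idx e1)) ` E"
    proof
      fix x assume "x \<in> idx ` (E - {e2})"
      then obtain g where g: "g \<in> E" "g \<noteq> e2" "x = idx g" by blast
      then have "x = (idx(e2 := idx e1)) g" by simp
      then show "x \<in> (idx(e2 := idx e1)) ` E" using g(1) by blast
    qed
  qed
  then have "num_colours E (idx(e2 := idx e1)) = card (idx ` (E - {e2}))" unfolding num_colours_def by simp
  also have "\<dots> = card (E - {e2})" using assms(2) by (meson Diff_subset card_image inj_on_subset)
  also have "\<dots> < card E" using assms(1,4) by (meson card_Diff1_less)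
  finally show ?thesis .
qed

lemma cycle_deg2:
  assumes cyc: "is_cycle V E vs" and z: "z \<in> set vs"
  shows "\<exists>p n. \<forall>t. {z, t} \<in> cycle_edges vs \<longrightarrow> t = p \<or> t = n"
proof -
  obtain ys where c: "is_cycle V E (z # ys)" "set (z # ys) = set vs" "cycle_edges (z # ys) = cycle_edges vs"
    using is_cycle_rotate_front[OF cyc z] by blast
  have d: "z \<notin> set ys" using c(1) unfolding is_cycle_alt by simp
  have yne: "ys \<noteq> []" using c(1) unfolding is_cycle_alt by auto
  have ce: "cycle_edges (z # ys) = insert {last ys, z} (insert {z, hd ys} (pedges ys))"
    using yne by (simp add: cycle_edges_alt pedges_Cons)
  have "\<forall>t. {z, t} \<in> cycle_edges vs \<longrightarrow> t = last ys \<or> t = hd ys"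
  proof (intro allI impI)
    fix t assume "{z, t} \<in> cycle_edges vs"
    then have "{z, t} \<in> insert {last ys, z} (insert {z, hd ys} (pedges ys))" using ce c(3) by simp
    moreover have "{z, t} \<notin> pedges ys" using pedges_subset_set[of "{z, t}" ys] d by blast
    ultimately have "{z, t} = {last ys, z} \<or> {z, t} = {z, hd ys}" by blast
    moreover have "last ys \<noteq> z" using d yne last_in_set by metis
    ultimately show "t = last ys \<or> t = hd ys" by (auto simp: doubleton_eq_iff)
  qed
  then show ?thesis by blast
qed

lemma cg_closure:
  assumes cg: "cycle_edges vs = E" and cv: "is_cycle V E vs" and sv: "set vs = V"
    and ws: "is_cycle V E ws" and z: "z \<in> set ws" and zt: "{z, t} \<in> E"
  shows "{z, t} \<in> cycle_edges ws"
proof -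
  have zV: "z \<in> set vs" using z ws sv unfolding is_cycle_alt by blast
  obtain p n where pn: "\<forall>t. {z, t} \<in> cycle_edges vs \<longrightarrow> t = p \<or> t = n"
    using cycle_deg2[OF cv zV] by blast
  obtain a c where ac: "a \<noteq> c" "{z, a} \<in> cycle_edges ws" "{z, c} \<in> cycle_edges ws"
    using cycle_nbrs[OF ws z] by blast
  have "{z, a} \<in> E" "{z, c} \<in> E" using ac ws unfolding is_cycle_alt by blast+
  then have "a = p \<or> a = n" "c = p \<or> c = n" using pn cg by blast+
  moreover have "t = p \<or> t = n" using pn cg zt by blast
  ultimately have "t = a \<or> t = c" using ac(1) by blast
  then show ?thesis using ac by blast
qed

lemma walk_closure:
  assumes "hd L \<in> S" "pedges L \<subseteq> E" "\<forall>z t. z \<in> S \<longrightarrow> {z, t} \<in> E \<longrightarrow> t \<in> S"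
  shows "set L \<subseteq> S"
  using assms
proof (induction L rule: pedges.induct)
  case (1 a b xs)
  have "{a, b} \<in> E" using "1.prems"(2) by simp
  then have "b \<in> S" using "1.prems"(1,3) by simp
  moreover have "pedges (b # xs) \<subseteq> E" using "1.prems"(2) by simp
  ultimately have "set (b # xs) \<subseteq> S" using "1.IH" "1.prems"(3) by simp
  then show ?case using "1.prems"(1) by simp
next
  case ("2_2" v) then show ?case by simp
qed simp

lemma cg_cycle_edges:
  assumes sg: "simple_graph V E" and cg: "is_cycle_graph V E" and ws: "is_cycle V E ws"
  shows "cycle_edges ws = E"
proof -
  obtain vs where vs: "is_cycle V E vs" "set vs = V" "cycle_edges vs = E"
    using cg unfolding is_cycle_graph_def by blast
  have wne: "ws \<noteq> []" using ws unfolding is_cycle_alt by auto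
  have z0: "hd ws \<in> set ws" using wne by simp
  have z0V: "hd ws \<in> set vs" using z0 ws vs(2) unfolding is_cycle_alt by blast
  obtain ys where c: "is_cycle V E (hd ws # ys)" "set (hd ws # ys) = set vs" "cycle_edges (hd ws # ys) = cycle_edges vs"
    using is_cycle_rotate_front[OF vs(1) z0V] by blast
  have clo: "\<forall>z t. z \<in> set ws \<longrightarrow> {z, t} \<in> E \<longrightarrow> t \<in> set ws"
  proof (intro allI impI)
    fix z t assume "z \<in> set ws" "{z, t} \<in> E"
    then have "{z, t} \<in> cycle_edges ws" using cg_closure[OF vs(3) vs(1) vs(2) ws] by blast
    then show "t \<in> set ws" using cycle_edges_subset_set[OF wne] by blast
  qed
  have "pedges (hd ws # ys) \<subseteq> E"
    using c(3) vs(3) cycle_edges_alt[of "hd ws # ys"] by blast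
  then have "set (hd ws # ys) \<subseteq> set ws" using walk_closure[of "hd ws # ys" "set ws" E] z0 clo by simp
  then have Vw: "V \<subseteq> set ws" using c(2) vs(2) by blast
  show ?thesis
  proof
    show "cycle_edges ws \<subseteq> E" using ws unfolding is_cycle_alt by blast
  next
    show "E \<subseteq> cycle_edges ws"
    proof
      fix g assume g: "g \<in> E"
      then obtain a b where ab: "g = {a, b}" "a \<in> V" using simple_edge[OF sg g] by blast
      then show "g \<in> cycle_edges ws" using cg_closure[OF vs(3) vs(1) vs(2) ws, of a b] Vw g by blast
    qed
  qed
qed

lemma cg_crx:
  assumes sg: "simple_graph V E" and cg: "is_cycle_graph V E" and k: "k \<le> card V"
  shows "crx k V E = card E"
proof -
  have fE: "finite E" using finite_E[OF sg] .
  obtain idx :: "'a set \<Rightarrow> nat" where idx: "inj_on idx E" using idx_exists[OF fE] by blast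
  obtain vs where vs: "is_cycle V E vs" "set vs = V" "cycle_edges vs = E"
    using cg unfolding is_cycle_graph_def by blast
  have col: "k_rainbow_cycle_colouring k V E idx"
    unfolding k_rainbow_cycle_colouring_def rainbow_cycle_def using vs idx by auto
  have "crx k V E \<le> card E" using crx_le[OF col] num_inj[OF idx] by simp
  moreover have "card E \<le> crx k V E"
  proof (rule crx_ge[OF col])
    fix c assume c: "k_rainbow_cycle_colouring k V E c"
    have fV: "finite V" using sg unfolding simple_graph_def by simp
    obtain S where S: "S \<subseteq> V" "card S = k" using obtain_subset_with_card_n[OF k] by blast
    then obtain ws where "rainbow_cycle V E c ws" "S \<subseteq> set ws"
      using c unfolding k_rainbow_cycle_colouring_def by blast
    then have "is_cycle V E ws" "inj_on c (cycle_edges ws)" unfolding rainbow_cycle_def by auto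
    then have "inj_on c E" using cg_cycle_edges[OF sg cg] by metis
    then show "card E \<le> num_colours E c" using num_inj[of c E] by simp
  qed
  ultimately show ?thesis by simp
qed

lemma ham_not_cg:
  assumes sg: "simple_graph V E" and h: "hamiltonian V E" and ncg: "\<not> is_cycle_graph V E"
  shows "crx k V E < card E"
proof -
  have fE: "finite E" using finite_E[OF sg] .
  obtain idx :: "'a set \<Rightarrow> nat" where idx: "inj_on idx E" using idx_exists[OF fE] by blast
  obtain vs where vs: "is_cycle V E vs" "set vs = V" using h unfolding hamiltonian_def by blast
  have ceE: "cycle_edges vs \<subseteq> E" using vs(1) unfolding is_cycle_alt by blast
  have ceN: "cycle_edges vs \<noteq> E" using ncg vs unfolding is_cycle_graph_def by blast
  have vne: "vs \<noteq> []" using vs(1) unfolding is_cycle_alt by auto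
  obtain g0 where g0: "g0 \<in> cycle_edges vs" using cycle_edges_alt[OF vne] by blast
  define c where "c = (\<lambda>g. if g \<in> cycle_edges vs then idx g else idx g0)"
  have inj: "inj_on c (cycle_edges vs)"
  proof -
    have "inj_on idx (cycle_edges vs)" using idx ceE inj_on_subset by blast
    moreover have "\<forall>g\<in>cycle_edges vs. c g = idx g" unfolding c_def by simp
    ultimately show ?thesis using inj_on_cong by (metis (mono_tags, lifting))
  qed
  have col: "k_rainbow_cycle_colouring k V E c"
    unfolding k_rainbow_cycle_colouring_def rainbow_cycle_def using vs inj by auto
  have sub: "c ` E \<subseteq> idx ` cycle_edges vs" using g0 unfolding c_def by auto
  have fin: "finite (idx ` cycle_edges vs)" using fE ceE finite_subset by blast
  have "num_colours E c \<le> card (idx ` cycle_edges vs)"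
    unfolding num_colours_def using card_mono[OF fin sub] .
  also have "\<dots> \<le> card (cycle_edges vs)" by (rule card_image_le) (use fE ceE finite_subset in blast)
  also have "\<dots> < card E" using ceE ceN fE by (meson psubsetI psubset_card_mono)
  finally show ?thesis using crx_le[OF col] by simp
qed

lemma card2_obtain: "card S = 2 \<Longrightarrow> \<exists>a b. S = {a, b} \<and> a \<noteq> b"
  unfolding card_2_iff by blast

lemma parta_neq:
  assumes sg: "simple_graph V E" and c3: "card V \<ge> 3"
    and cov: "\<forall>v\<in>V. \<exists>vs. is_cycle V E vs \<and> v \<in> set vs" and ncg: "\<not> is_cycle_graph V E"
  shows "crx 1 V E < card E"
proof (cases "hamiltonian V E")
  case True then show ?thesis using ham_not_cg[OF sg True ncg] by blast
next
  case nh: False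
  have fV: "finite V" using sg unfolding simple_graph_def by simp
  have fE: "finite E" using finite_E[OF sg] .
  obtain idx :: "'a set \<Rightarrow> nat" where idx: "inj_on idx E" using idx_exists[OF fE] by blast
  define CC where "CC = {vs. is_cycle V E vs}"
  have fCC: "finite CC"
  proof -
    have "CC \<subseteq> {xs. set xs \<subseteq> V \<and> distinct xs}" unfolding CC_def is_cycle_alt by blast
    then show ?thesis using finite_subset_distinct[OF fV] finite_subset by blast
  qed
  define covers where "covers F \<longleftrightarrow> F \<subseteq> CC \<and> (\<forall>v\<in>V. \<exists>C\<in>F. v \<in> set C)" for F
  have "covers CC" unfolding covers_def CC_def using cov by blast
  then obtain F where F: "covers F" and Fmin: "\<forall>F'. covers F' \<longrightarrow> card F \<le> card F'"
    using ex_has_least_nat[of covers CC card] by blast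
  have FCC: "F \<subseteq> CC" and Fcov: "\<forall>v\<in>V. \<exists>C\<in>F. v \<in> set C" using F unfolding covers_def by auto
  have fF: "finite F" using FCC fCC finite_subset by blast
  have priv: "\<exists>p\<in>set C. \<forall>C'\<in>F. C' \<noteq> C \<longrightarrow> p \<notin> set C'" if C: "C \<in> F" for C
  proof (rule ccontr)
    assume np: "\<not> ?thesis"
    have "covers (F - {C})"
      unfolding covers_def
    proof (intro conjI ballI)
      show "F - {C} \<subseteq> CC" using FCC by blast
    next
      fix v assume v: "v \<in> V"
      then obtain C'' where C'': "C'' \<in> F" "v \<in> set C''" using Fcov by blast
      show "\<exists>C'\<in>F - {C}. v \<in> set C'"
      proof (cases "C'' = C")
        case True
        then show ?thesis using np C'' by blast
      next
        case False then show ?thesis using C'' by blast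
      qed
    qed
    then have "card F \<le> card (F - {C})" using Fmin by blast
    moreover have "card (F - {C}) < card F" using fF C by (meson card_Diff1_less)
    ultimately show False by simp
  qed
  have Vne: "V \<noteq> {}" using c3 by auto
  then obtain v0 where v0: "v0 \<in> V" by blast
  then obtain C1 where C1: "C1 \<in> F" "v0 \<in> set C1" using Fcov by blast
  have C1c: "is_cycle V E C1" using C1 FCC unfolding CC_def by blast
  have "set C1 \<noteq> V" using nh C1c unfolding hamiltonian_def by blast
  then obtain v1 where v1: "v1 \<in> V" "v1 \<notin> set C1" using C1c unfolding is_cycle_alt by blast
  then obtain C2 where C2: "C2 \<in> F" "v1 \<in> set C2" using Fcov by blast
  have C2c: "is_cycle V E C2" using C2 FCC unfolding CC_def by blast
  have C12: "C1 \<noteq> C2" using v1 C2 by blast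
  obtain p1 where p1: "p1 \<in> set C1" "\<forall>C'\<in>F. C' \<noteq> C1 \<longrightarrow> p1 \<notin> set C'" using priv[OF C1(1)] by blast
  obtain p2 where p2: "p2 \<in> set C2" "\<forall>C'\<in>F. C' \<noteq> C2 \<longrightarrow> p2 \<notin> set C'" using priv[OF C2(1)] by blast
  obtain a where a: "{p1, a} \<in> cycle_edges C1" using cycle_nbrs[OF C1c p1(1)] by blast
  obtain b where b: "{p2, b} \<in> cycle_edges C2" using cycle_nbrs[OF C2c p2(1)] by blast
  define e1 where "e1 = {p1, a}"
  define e2 where "e2 = {p2, b}"
  have e1E: "e1 \<in> E" using cycle_edge_in_E[OF C1c a] unfolding e1_def .
  have e2E: "e2 \<in> E" using cycle_edge_in_E[OF C2c b] unfolding e2_def .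
  have inC: "C = C1" if "C \<in> F" "e1 \<in> cycle_edges C" for C
  proof -
    have "C \<noteq> []" using that FCC unfolding CC_def is_cycle_alt by auto
    then have "p1 \<in> set C" using cycle_edges_subset_set that(2) unfolding e1_def by blast
    then show ?thesis using p1(2) that(1) by blast
  qed
  have inC2: "C = C2" if "C \<in> F" "e2 \<in> cycle_edges C" for C
  proof -
    have "C \<noteq> []" using that FCC unfolding CC_def is_cycle_alt by auto
    then have "p2 \<in> set C" using cycle_edges_subset_set that(2) unfolding e2_def by blast
    then show ?thesis using p2(2) that(1) by blast
  qed
  have e12: "e1 \<noteq> e2"
  proof
    assume "e1 = e2"
    then have "e1 \<in> cycle_edges C2" using b unfolding e2_def by simp
    then have "C2 = C1" using inC C2(1) by blast
    then show False using C12 by simp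
  qed
  define c where "c = idx(e2 := idx e1)"
  have col: "k_rainbow_cycle_colouring 1 V E c"
    unfolding k_rainbow_cycle_colouring_def
  proof (intro allI impI)
    fix S assume S: "S \<subseteq> V \<and> card S = 1"
    then have "card S = 1" by simp
    then obtain v where v: "S = {v}" by (rule card_1_singletonE)
    then have "v \<in> V" using S by simp
    then obtain C where C: "C \<in> F" "v \<in> set C" using Fcov by blast
    have Cc: "is_cycle V E C" using C FCC unfolding CC_def by blast
    have X: "cycle_edges C \<subseteq> E" using Cc unfolding is_cycle_alt by blast
    have "\<not> (e1 \<in> cycle_edges C \<and> e2 \<in> cycle_edges C)" using inC inC2 C(1) C12 by blast
    then have "inj_on c (cycle_edges C)" unfolding c_def by (rule inj_merge[OF idx X e1E e2E e12])
    then have "rainbow_cycle V E c C" using Cc unfolding rainbow_cycle_def by simp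
    then show "\<exists>vs. rainbow_cycle V E c vs \<and> S \<subseteq> set vs" using C v by blast
  qed
  have "num_colours E c < card E" unfolding c_def by (rule num_merge[OF fE idx e1E e2E e12])
  then show ?thesis using crx_le[OF col] by simp
qed

lemma partb_min:
  assumes sg: "simple_graph V E" and tc: "two_connected V E" and mn: "minimally_two_connected V E"
  shows "crx 2 V E = card E"
proof -
  have fE: "finite E" using finite_E[OF sg] .
  obtain idx :: "'a set \<Rightarrow> nat" where idx: "inj_on idx E" using idx_exists[OF fE] by blast
  have col: "k_rainbow_cycle_colouring 2 V E idx"
    unfolding k_rainbow_cycle_colouring_def
  proof (intro allI impI)
    fix S assume S: "S \<subseteq> V \<and> card S = 2"
    then obtain a b where ab: "S = {a, b}" "a \<noteq> b" using card2_obtain by blast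
    then obtain ws where ws: "is_cycle V E ws" "a \<in> set ws" "b \<in> set ws"
      using whitney[OF sg tc] S by blast
    have "inj_on idx (cycle_edges ws)" using idx ws(1) unfolding is_cycle_alt by (meson inj_on_subset)
    then show "\<exists>vs. rainbow_cycle V E idx vs \<and> S \<subseteq> set vs"
      using ws ab unfolding rainbow_cycle_def by blast
  qed
  have "crx 2 V E \<le> card E" using crx_le[OF col] num_inj[OF idx] by simp
  moreover have "card E \<le> crx 2 V E"
  proof (rule crx_ge[OF col])
    fix c assume c: "k_rainbow_cycle_colouring 2 V E c"
    show "card E \<le> num_colours E c"
    proof (rule ccontr)
      assume "\<not> card E \<le> num_colours E c"
      then have "\<not> inj_on c E" using num_inj[of c E] by auto
      then obtain e f where ef: "e \<in> E" "f \<in> E" "e \<noteq> f" "c e = c f" unfolding inj_on_def by blast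
      have mn': "\<forall>g\<in>E. \<not> two_connected V (E - {g})" using mn unfolding minimally_two_connected_def by blast
      obtain p q where pq: "good V E e f p q" using good_pair[OF sg tc mn' ef(1,2,3)] by blast
      then have pq': "p \<in> V" "q \<in> V" "p \<noteq> q" "forced V E e p q" "forced V E f p q"
        unfolding good_def by auto
      have "{p, q} \<subseteq> V \<and> card {p, q} = 2" using pq' by simp
      then obtain ws where ws: "rainbow_cycle V E c ws" "{p, q} \<subseteq> set ws"
        using c unfolding k_rainbow_cycle_colouring_def by blast
      have wc: "is_cycle V E ws" "inj_on c (cycle_edges ws)" using ws(1) unfolding rainbow_cycle_def by auto
      have "e \<in> cycle_edges ws" "f \<in> cycle_edges ws"
        using pq'(4,5) wc(1) ws(2) unfolding forced_def by auto
      then have "e = f" using wc(2) ef(4) unfolding inj_on_def by blast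
      then show False using ef(3) by simp
    qed
  qed
  ultimately show ?thesis by simp
qed

lemma partb_nonmin:
  assumes sg: "simple_graph V E" and tc: "two_connected V E" and nm: "\<not> minimally_two_connected V E"
  shows "crx 2 V E < card E"
proof -
  have fE: "finite E" using finite_E[OF sg] .
  obtain idx :: "'a set \<Rightarrow> nat" where idx: "inj_on idx E" using idx_exists[OF fE] by blast
  obtain g where g: "g \<in> E" "two_connected V (E - {g})"
    using nm tc unfolding minimally_two_connected_def by blast
  have sg': "simple_graph V (E - {g})" using sg unfolding simple_graph_def by blast
  have fin: "finite V" "card V \<ge> 3" using sg tc unfolding simple_graph_def two_connected_def by auto
  obtain a0 where a0: "a0 \<in> V" using fin(2) by (metis card.empty ex_in_conv not_numeral_le_zero)
  obtain b0 where b0: "b0 \<in> V" "b0 \<noteq> a0" using third_vertex[OF fin, of a0 a0] by blast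
  obtain ws0 where ws0: "is_cycle V (E - {g}) ws0" using whitney[OF sg' g(2) a0 b0(1)] b0(2) by blast
  have "ws0 \<noteq> []" using ws0 unfolding is_cycle_alt by auto
  then obtain h where h: "h \<in> cycle_edges ws0" using cycle_edges_alt by blast
  have hE: "h \<in> E" "h \<noteq> g" using h ws0 unfolding is_cycle_alt by blast+
  define c where "c = idx(g := idx h)"
  have col: "k_rainbow_cycle_colouring 2 V E c"
    unfolding k_rainbow_cycle_colouring_def
  proof (intro allI impI)
    fix S assume S: "S \<subseteq> V \<and> card S = 2"
    then obtain a b where ab: "S = {a, b}" "a \<noteq> b" using card2_obtain by blast
    then obtain ws where ws: "is_cycle V (E - {g}) ws" "a \<in> set ws" "b \<in> set ws"
      using whitney[OF sg' g(2)] S by blast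
    have X: "cycle_edges ws \<subseteq> E" "g \<notin> cycle_edges ws" using ws(1) unfolding is_cycle_alt by blast+
    have wsE: "is_cycle V E ws" using ws(1) X(1) unfolding is_cycle_alt by blast
    have "\<not> (h \<in> cycle_edges ws \<and> g \<in> cycle_edges ws)" using X(2) by blast
    then have "inj_on c (cycle_edges ws)" unfolding c_def by (rule inj_merge[OF idx X(1) hE(1) g(1) hE(2)])
    then show "\<exists>vs. rainbow_cycle V E c vs \<and> S \<subseteq> set vs"
      using wsE ws ab unfolding rainbow_cycle_def by blast
  qed
  have "num_colours E c < card E" unfolding c_def by (rule num_merge[OF fE idx hE(1) g(1) hE(2)])
  then show ?thesis using crx_le[OF col] by simp
qed

theorem theorem2p4:
  fixes V :: "'a set" and E :: "'a set set"
  assumes "simple_graph V E" and "card V \<ge> 3"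
  shows "((\<forall>v\<in>V. \<exists>vs. is_cycle V E vs \<and> v \<in> set vs) \<longrightarrow>
            (crx 1 V E = card E \<longleftrightarrow> is_cycle_graph V E))
       \<and> (two_connected V E \<longrightarrow>
            (crx 2 V E = card E \<longleftrightarrow> minimally_two_connected V E))
       \<and> (hamiltonian V E \<longrightarrow>
            (\<forall>k. 1 \<le> k \<and> k \<le> card V \<longrightarrow>
               (crx k V E = card E \<longleftrightarrow> is_cycle_graph V E)))"
proof (intro conjI impI allI)
  assume cov: "\<forall>v\<in>V. \<exists>vs. is_cycle V E vs \<and> v \<in> set vs"
  show "crx 1 V E = card E \<longleftrightarrow> is_cycle_graph V E"
  proof
    assume "crx 1 V E = card E"
    then show "is_cycle_graph V E" using parta_neq[OF assms cov] by fastforce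
  next
    assume "is_cycle_graph V E"
    then show "crx 1 V E = card E" using cg_crx[OF assms(1)] assms(2) by simp
  qed
next
  assume tc: "two_connected V E"
  show "crx 2 V E = card E \<longleftrightarrow> minimally_two_connected V E"
  proof
    assume "crx 2 V E = card E"
    then show "minimally_two_connected V E" using partb_nonmin[OF assms(1) tc] by fastforce
  next
    assume "minimally_two_connected V E"
    then show "crx 2 V E = card E" using partb_min[OF assms(1) tc] by simp
  qed
next
  fix k assume h: "hamiltonian V E" and k: "1 \<le> k \<and> k \<le> card V"
  show "crx k V E = card E \<longleftrightarrow> is_cycle_graph V E"
  proof
    assume "crx k V E = card E"
    then show "is_cycle_graph V E" using ham_not_cg[OF assms(1) h, of k] by fastforce
  next
    assume "is_cycle_graph V E"
    then show "crx k V E = card E" using cg_crx[OF assms(1)] k by simp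
  qed
qed

end
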